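(* Let $(X,d,\mu)$, $p$, $\underline{Q}_\mu$ be as in the context, let $\theta_2\in(0,\min\{p,\underline{Q}_\mu\})$ and let $S^2\in\mathcal{ADR}_{\theta_2}(X)$ be a closed set. Then for each $c\ge1$ there is a constant $C>0$ such that whenever $\{B_{r_i}(x_i)\}_{i=1}^{M}$, $M\in\mathbb N$, is an $(S^2,c)$-nice family with $\max_i8cr_i\le1$, then for every $f\in L_p(\mathcal H_{\theta_2}\lfloor_{S^2})$, $$\sum_{i=1}^{M}\frac{\mu(B_{r_i}(x_i))}{r_i^p}\Big(\mathcal E_{\mathcal H_{\theta_2}\lfloor_{S^2}}(f,B_{2cr_i}(x_i))\Big)^p\le C\|f|\mathrm B^{1-\theta_2/p}_p(S^2)\|^p.$$
   Context: Standing setting: $(X,d)$ complete separable metric space, $\mu$ a Borel regular locally finite outer measure, $\operatorname{supp}\mu=X$, uniformly locally doubling (for every $R>0$, $\sup_{r\in(0,R]}\sup_x\mu(B_{2r}(x))/\mu(B_r(x))<\infty$). Balls are closed, $B_r(x)=\{y:d(x,y)\le r\}$, $B_k(x)=B_{2^{-k}}(x)$. A fixed $p\in(1,\infty)$; $X$ supports a weak local $(1,p)$-Poincaré inequality (for every $R>0$ there are $C,\lambda\ge1$ with $\inf_c\frac{1}{\mu(B_r(x))}\int_{B_r(x)}|f-c|d\mu\le Cr(\frac{1}{\mu(B_{\lambda r}(x))}\int_{B_{\lambda r}(x)}(\operatorname{lip}f)^pd\mu)^{1/p}$ for Lipschitz $f$, $x\in X$, $r\in(0,R]$). $\underline{Q}_\mu$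 is the infimum of $Q>0$ such that for every $R>0$ there is $C$ with $(r_{B'}/r_B)^Q\le C\mu(B')/\mu(B)$ for balls $B'\subset B$, $0<r_{B'}\le r_B\le R$. Notation: $\mathcal E_{\mathfrak m}(g,G):=\inf_{c\in\mathbb R}\mathfrak m(G)^{-1}\int_G|g-c|d\mathfrak m$ if $\mathfrak m(G)>0$, $0$ otherwise; $\mathfrak m\lfloor_S(E)=\mathfrak m(E\cap S)$. $\mathcal H_{\vartheta,\delta}(E):=\inf\{\sum\mu(B_{r_i}(x_i))r_i^{-\vartheta}:E\subset\bigcup B_{r_i}(x_i),0<r_i<\delta\}$, $\mathcal H_\vartheta=\lim_{\delta\to0}\mathcal H_{\vartheta,\delta}$. $\mathcal{ADR}_\vartheta(X)$: closed $S'$ with $\varkappa_1\mu(B_r(x))r^{-\vartheta}\le\mathcal H_\vartheta(B_r(x)\cap S')\le\varkappa_2\mu(B_r(x))r^{-\vartheta}$ for $x\in S'$, $r\in(0,1]$. Besov norm: $\|f|\mathrm B^s_p(S^2)\|:=\|f|L_p(\mathcal H_{\theta_2}\lfloor_{S^2})\|+(\sum_{k\ge1}2^{ksp}\int_{S^2}(\mathcal E_{\mathcal H_{\theta_2}\lfloor_{S^2}}(f,B_k(x)))^pd\mathcal H_{\theta_2}(x))^{1/p}$. A finite family of closed balls $\{B_{r_i}(x_i)\}$ is $(S^2,c)$-nice if the balls are pairwise disjoint, $\max_ir_i\le1$, and $B_{cr_i}(x_i)\cap S^2\ne\emptyset$ for all $i$. *)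

theory Defs
  imports "HOL-Analysis.Analysis"
begin

text \<open>Real powers of extended nonnegative reals (used only with positive exponents).\<close>
definition epow :: "ennreal \<Rightarrow> real \<Rightarrow> ennreal" where
  "epow x q = (if x = top then top else ennreal (enn2real x powr q))"

definition osc :: "'a measure \<Rightarrow> ('a \<Rightarrow> real) \<Rightarrow> 'a set \<Rightarrow> ennreal" where
  "osc m g G = (if emeasure m G > 0
      then (INF c::real. (\<integral>\<^sup>+ y\<in>G. ennreal \<bar>g y - c\<bar> \<partial>m) / emeasure m G)
      else 0)"

definition lip :: "('a::metric_space \<Rightarrow> real) \<Rightarrow> 'a \<Rightarrow> ennreal" where
  "lip f x = Liminf (at_right 0) (\<lambda>r::real. (SUP y\<in>cball x r. ennreal (\<bar>f y - f x\<bar> / r)))"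

definition lipschitz_fun :: "('a::metric_space \<Rightarrow> real) \<Rightarrow> bool" where
  "lipschitz_fun f \<longleftrightarrow> (\<exists>L. \<forall>x y. \<bar>f x - f y\<bar> \<le> L * dist x y)"

text \<open>Standing assumptions on (X,d,mu) and p. X is the whole type (complete separable metric
  space = polish_space); mu is given through its values on Borel sets (Borel regular).\<close>
definition standing_setting :: "'a::polish_space measure \<Rightarrow> real \<Rightarrow> bool" where
  "standing_setting mu p \<longleftrightarrow>
     sets mu = sets borel \<and>
     (\<forall>x. \<exists>e>0. emeasure mu (cball x e) < \<infinity>) \<and>
     (\<forall>x. \<forall>r>0. emeasure mu (cball x r) > 0) \<and>
     (\<forall>R>0. \<exists>C. \<forall>r. 0 < r \<and> r \<le> R \<longrightarrow>
        (\<forall>x. emeasure mu (cball x (2*r)) \<le> ennreal C * emeasure mu (cball x r))) \<and>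
     1 < p \<and>
     (\<forall>R>0. \<exists>C lam. C \<ge> 1 \<and> lam \<ge> 1 \<and>
        (\<forall>f x r. lipschitz_fun f \<and> 0 < r \<and> r \<le> R \<longrightarrow>
           osc mu f (cball x r) \<le> ennreal (C * r) *
             epow ((\<integral>\<^sup>+ y\<in>cball x (lam*r). epow (lip f y) p \<partial>mu) / emeasure mu (cball x (lam*r)))
                  (1/p)))"

definition Qlow :: "'a::metric_space measure \<Rightarrow> real" where
  "Qlow mu = Inf {Q. Q > 0 \<and> (\<forall>R>0. \<exists>C. \<forall>x x' r r'.
       cball x' r' \<subseteq> cball x r \<and> 0 < r' \<and> r' \<le> r \<and> r \<le> R \<longrightarrow>
       ennreal ((r'/r) powr Q) * emeasure mu (cball x r) \<le> ennreal C * emeasure mu (cball x' r'))}"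

definition Hdelta :: "'a::metric_space measure \<Rightarrow> real \<Rightarrow> real \<Rightarrow> 'a set \<Rightarrow> ennreal" where
  "Hdelta mu th \<delta> E = (INF cov \<in> {(I, x, r). (\<forall>i\<in>I. 0 < r i \<and> r i < \<delta>) \<and>
         E \<subseteq> (\<Union>i\<in>I. cball (x i) (r i))}.
       (case cov of (I, x, r) \<Rightarrow>
          (\<Sum>i. if i \<in> (I::nat set) then emeasure mu (cball (x i) (r i)) * ennreal (r i powr (-th)) else 0)))"

definition Hcod :: "'a::metric_space measure \<Rightarrow> real \<Rightarrow> 'a set \<Rightarrow> ennreal" where
  "Hcod mu th E = (SUP \<delta>\<in>{0<..}. Hdelta mu th \<delta> E)"

definition Hrestr :: "'a::metric_space measure \<Rightarrow> real \<Rightarrow> 'a set \<Rightarrow> 'a measure" where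
  "Hrestr mu th S = measure_of UNIV (sets borel) (\<lambda>A. Hcod mu th (A \<inter> S))"

definition ADR :: "'a::metric_space measure \<Rightarrow> real \<Rightarrow> 'a set set" where
  "ADR mu th = {S. closed S \<and> (\<exists>k1 k2. k1 > 0 \<and> k2 > 0 \<and>
      (\<forall>x\<in>S. \<forall>r. 0 < r \<and> r \<le> 1 \<longrightarrow>
         ennreal k1 * emeasure mu (cball x r) * ennreal (r powr (-th)) \<le> Hcod mu th (cball x r \<inter> S) \<and>
         Hcod mu th (cball x r \<inter> S) \<le> ennreal k2 * emeasure mu (cball x r) * ennreal (r powr (-th))))}"

definition in_Lp :: "'a measure \<Rightarrow> real \<Rightarrow> ('a \<Rightarrow> real) \<Rightarrow> bool" where
  "in_Lp m p f \<longleftrightarrow> f \<in> borel_measurable m \<and> (\<integral>\<^sup>+ x. ennreal (\<bar>f x\<bar> powr p) \<partial>m) < \<infinity>"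

definition besov_norm :: "'a::metric_space measure \<Rightarrow> real \<Rightarrow> 'a set \<Rightarrow> real \<Rightarrow> real \<Rightarrow> ('a \<Rightarrow> real) \<Rightarrow> ennreal" where
  "besov_norm mu th S s p f =
     epow (\<integral>\<^sup>+ x. ennreal (\<bar>f x\<bar> powr p) \<partial>Hrestr mu th S) (1/p) +
     epow (\<Sum>k. ennreal (2 powr (real (Suc k) * s * p)) *
             (\<integral>\<^sup>+ x\<in>S. epow (osc (Hrestr mu th S) f (cball x (2 powr (- real (Suc k))))) p
                \<partial>Hrestr mu th S)) (1/p)"

definition nice_family :: "'a::metric_space set \<Rightarrow> real \<Rightarrow> nat \<Rightarrow> (nat \<Rightarrow> 'a) \<Rightarrow> (nat \<Rightarrow> real) \<Rightarrow> bool" where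
  "nice_family S c M x r \<longleftrightarrow>
     (\<forall>i<M. 0 < r i \<and> r i \<le> 1 \<and> cball (x i) (c * r i) \<inter> S \<noteq> {}) \<and>
     (\<forall>i<M. \<forall>j<M. i \<noteq> j \<longrightarrow> cball (x i) (r i) \<inter> cball (x j) (r j) = {})"

end

theory Submission
  imports Defs
begin


lemma epow_zero[simp]: "0 < q \<Longrightarrow> epow 0 q = 0"
  by (simp add: epow_def)

lemma epow_mono: assumes "x \<le> y" "0 \<le> q" shows "epow x q \<le> epow y q"
proof (cases "y = top")
  case True then show ?thesis by (simp add: epow_def)
next
  case False
  then have "x \<noteq> top" using assms(1) top.extremum_unique by fastforce
  then have "enn2real x \<le> enn2real y" using assms(1) False by (simp add: enn2real_mono less_top)
  then have "enn2real x powr q \<le> enn2real y powr q" using assms(2) by (simp add: powr_mono2)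
  then show ?thesis using False \<open>x \<noteq> top\<close> by (simp add: epow_def ennreal_leI)
qed

lemma epow_mult: assumes "0 \<le> a" "0 < q"
  shows "epow (ennreal a * x) q = ennreal (a powr q) * epow x q"
proof (cases "a = 0")
  case True then show ?thesis using assms by (simp add: epow_def)
next
  case False
  then have a: "a > 0" using assms by simp
  show ?thesis
  proof (cases "x = top")
    case True
    then show ?thesis using a by (simp add: epow_def ennreal_mult_top)
  next
    case False
    then have "ennreal a * x \<noteq> top" using a by (simp add: ennreal_mult_eq_top_iff)
    moreover have "enn2real (ennreal a * x) = a * enn2real x" using a by (simp add: enn2real_mult)
    ultimately show ?thesis using False a
      by (simp add: epow_def powr_mult ennreal_mult'[symmetric] enn2real_nonneg)
  qed
qed

lemma epow_inv: assumes "0 < p" shows "epow (epow b (1/p)) p = b"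
proof (cases "b = top")
  case True then show ?thesis by (simp add: epow_def)
next
  case False
  have "(enn2real b powr (1/p)) powr p = enn2real b"
    using assms by (simp add: powr_powr)
  then show ?thesis using False by (simp add: epow_def less_top)
qed

lemma nn_integral_superadd:
  "integral\<^sup>N M f + integral\<^sup>N M g \<le> (\<integral>\<^sup>+ x. f x + g x \<partial>M)"
proof -
  let ?A = "{h. simple_function M h \<and> h \<le> f}"
  let ?B = "{h. simple_function M h \<and> h \<le> g}"
  have ne: "?A \<noteq> {}" "?B \<noteq> {}" by (auto intro!: exI[of _ "\<lambda>_. 0"] simp: le_fun_def)
  have "integral\<^sup>N M f + integral\<^sup>N M g = (SUP a\<in>?A. integral\<^sup>S M a) + (SUP b\<in>?B. integral\<^sup>S M b)"
    by (simp add: nn_integral_def)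
  also have "\<dots> = (SUP a\<in>?A. integral\<^sup>S M a + (SUP b\<in>?B. integral\<^sup>S M b))"
    using ennreal_SUP_add_left[OF ne(1)] by simp
  also have "\<dots> = (SUP a\<in>?A. SUP b\<in>?B. integral\<^sup>S M a + integral\<^sup>S M b)"
    using ennreal_SUP_add_right[OF ne(2)] by simp
  also have "\<dots> \<le> (\<integral>\<^sup>+ x. f x + g x \<partial>M)"
  proof (intro SUP_least)
    fix a b assume "a \<in> ?A" "b \<in> ?B"
    then have "integral\<^sup>S M a + integral\<^sup>S M b = integral\<^sup>S M (\<lambda>x. a x + b x)" by simp
    also have "\<dots> \<le> (\<integral>\<^sup>+ x. f x + g x \<partial>M)"
      using \<open>a \<in> ?A\<close> \<open>b \<in> ?B\<close> unfolding nn_integral_def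
      by (intro SUP_upper) (auto simp: le_fun_def intro: add_mono)
    finally show "integral\<^sup>S M a + integral\<^sup>S M b \<le> (\<integral>\<^sup>+ x. f x + g x \<partial>M)" .
  qed
  finally show ?thesis .
qed

lemma nn_integral_sum_superadd:
  "(\<Sum>i\<in>P. integral\<^sup>N M (f i)) \<le> (\<integral>\<^sup>+ x. (\<Sum>i\<in>P. f i x) \<partial>M)"
proof (induction P rule: infinite_finite_induct)
  case (insert i P)
  have "(\<Sum>i\<in>insert i P. integral\<^sup>N M (f i)) = integral\<^sup>N M (f i) + (\<Sum>i\<in>P. integral\<^sup>N M (f i))"
    using insert by simp
  also have "\<dots> \<le> integral\<^sup>N M (f i) + (\<integral>\<^sup>+ x. (\<Sum>i\<in>P. f i x) \<partial>M)"
    using insert by (simp add: add_left_mono)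
  also have "\<dots> \<le> (\<integral>\<^sup>+ x. f i x + (\<Sum>i\<in>P. f i x) \<partial>M)" by (rule nn_integral_superadd)
  also have "\<dots> = (\<integral>\<^sup>+ x. (\<Sum>i\<in>insert i P. f i x) \<partial>M)" using insert by simp
  finally show ?case .
qed auto



lemma nn_integral_cmult_le:
  assumes "0 \<le> a"
  shows "(\<integral>\<^sup>+x. ennreal a * h x \<partial>M) \<le> ennreal a * integral\<^sup>N M h"
proof (cases "a = 0")
  case True then show ?thesis by simp
next
  case False
  then have a: "a > 0" using assms by simp
  show ?thesis
    unfolding nn_integral_def[of M "\<lambda>x. ennreal a * h x"]
  proof (rule SUP_least)
    fix s assume "s \<in> {g. simple_function M g \<and> g \<le> (\<lambda>x. ennreal a * h x)}"
    then have s: "simple_function M s" "\<And>x. s x \<le> ennreal a * h x" by (auto simp: le_fun_def)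
    define s' where "s' = (\<lambda>x. ennreal (1/a) * s x)"
    have eq: "s x = ennreal a * s' x" for x
      using a by (simp add: s'_def mult.assoc[symmetric] ennreal_mult[symmetric])
    have ss': "simple_function M s'" unfolding s'_def using s(1) by auto
    have "s' x \<le> h x" for x
    proof -
      have "s' x \<le> ennreal (1/a) * (ennreal a * h x)" unfolding s'_def using s(2) by (intro mult_left_mono) auto
      also have "\<dots> = h x" using a by (simp add: mult.assoc[symmetric] ennreal_mult[symmetric])
      finally show ?thesis .
    qed
    then have "integral\<^sup>S M s' \<le> integral\<^sup>N M h"
      unfolding nn_integral_def using ss' by (intro SUP_upper) (auto simp: le_fun_def)
    moreover have "integral\<^sup>S M s = ennreal a * integral\<^sup>S M s'"
    proof -
      have "s = (\<lambda>x. ennreal a * s' x)" using eq by (rule ext)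
      then have "integral\<^sup>S M s = (\<integral>\<^sup>Sx. ennreal a * s' x \<partial>M)" by simp
      also have "\<dots> = ennreal a * integral\<^sup>S M s'" using ss' by (rule simple_integral_mult)
      finally show ?thesis .
    qed
    ultimately show "integral\<^sup>S M s \<le> ennreal a * integral\<^sup>N M h"
      by (simp add: mult_left_mono)
  qed
qed


lemma doubling_iter:
  assumes dbl: "\<And>x r. 0 < r \<Longrightarrow> r \<le> R \<Longrightarrow> emeasure mu (cball x (2*r)) \<le> ennreal D * emeasure mu (cball x r)"
    and D: "0 \<le> D" and r: "0 < r"
  shows "2^n * r \<le> 2 * R \<Longrightarrow> emeasure mu (cball x (2^n * r)) \<le> ennreal (D^n) * emeasure mu (cball x r)"
proof (induction n)
  case 0 then show ?case by simp
next
  case (Suc n)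
  have h: "2^n * r \<le> R" using Suc.prems by simp
  have "emeasure mu (cball x (2^Suc n * r)) = emeasure mu (cball x (2 * (2^n * r)))"
    by (simp add: mult.assoc)
  also have "\<dots> \<le> ennreal D * emeasure mu (cball x (2^n * r))"
    using dbl[of "2^n*r" x] h r by simp
  also have "\<dots> \<le> ennreal D * (ennreal (D^n) * emeasure mu (cball x r))"
  proof (intro mult_left_mono Suc.IH)
    have "0 < 2^n * r" using r by simp
    then show "2^n * r \<le> 2 * R" using h by linarith
  qed simp
  also have "\<dots> = ennreal (D ^ Suc n) * emeasure mu (cball x r)"
    using D by (simp add: ennreal_mult mult.assoc)
  finally show ?case .
qed


lemma coeff_bound:
  fixes \<rho> r c p \<theta> t :: real
  assumes "0 < r" "1 \<le> c" "\<rho> = c * r" "0 < \<theta>" "\<theta> < p" "t < 8 * \<rho>" "t = 2 powr (- real k)"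
  shows "\<rho> powr \<theta> / r powr p \<le> c powr p * 8 powr (p - \<theta>) * 2 powr (real k * (1 - \<theta>/p) * p)"
proof -
  have rp: "\<rho> > 0" using assms by simp
  have tp: "t > 0" using assms(7) by simp
  have q1: "\<rho> powr \<theta> / r powr p = c powr p * \<rho> powr (\<theta> - p)"
  proof -
    have "\<rho> powr (\<theta> - p) = \<rho> powr \<theta> / \<rho> powr p" by (rule powr_diff)
    moreover have "\<rho> powr p = c powr p * r powr p" using assms(1,2,3) by (simp add: powr_mult)
    moreover have "r powr p > 0" "c powr p > 0" using assms(1,2) by auto
    ultimately show ?thesis by (simp add: field_simps)
  qed
  have q2: "\<rho> powr (\<theta> - p) \<le> (t/8) powr (\<theta> - p)"
    using assms(5,6) tp by (intro powr_mono2') auto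
  have e1: "(t/8) powr (\<theta> - p) = t powr (\<theta> - p) / 8 powr (\<theta> - p)"
    using tp by (intro powr_divide)
  have e2: "t powr (\<theta> - p) = 2 powr (real k * (1 - \<theta>/p) * p)"
  proof -
    have h: "real k * (1 - \<theta>/p) * p = - real k * (\<theta> - p)" using assms(4,5) by (simp add: field_simps)
    have "t powr (\<theta> - p) = 2 powr (- real k * (\<theta> - p))" unfolding assms(7) by (rule powr_powr)
    then show ?thesis by (simp only: h)
  qed
  have e3: "1 / 8 powr (\<theta> - p) = 8 powr (p - \<theta>)"
    by (metis minus_diff_eq powr_minus_divide)
  have q3: "(t/8) powr (\<theta> - p) = 8 powr (p - \<theta>) * 2 powr (real k * (1 - \<theta>/p) * p)"
    unfolding e1 e2 using e3 by (metis mult.commute times_divide_eq_left mult_1)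
  have "c powr p * \<rho> powr (\<theta> - p) \<le> c powr p * (t/8) powr (\<theta> - p)"
    using q2 by (intro mult_left_mono) auto
  then show ?thesis using q1 q3 by (simp add: mult.assoc)
qed


lemma osc_ratio:
  assumes "A \<subseteq> B" "A \<in> sets m" "B \<in> sets m" "0 < emeasure m A" "emeasure m B < \<infinity>"
    "emeasure m B \<le> ennreal K * emeasure m A" "0 \<le> K"
  shows "osc m g A \<le> ennreal K * osc m g B"
proof -
  have AB: "emeasure m A \<le> emeasure m B" using emeasure_mono[OF assms(1,3)] .
  define a where "a = measure m A"
  define b where "b = measure m B"
  have a: "emeasure m A = ennreal a" unfolding a_def
    using AB assms(5) by (intro emeasure_eq_ennreal_measure) auto
  have b: "emeasure m B = ennreal b" unfolding b_def
    using assms(5) by (intro emeasure_eq_ennreal_measure) auto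
  have a0: "a > 0" using assms(4) a by simp
  have b0: "b > 0" using assms(4) AB b a a0 ennreal_le_iff by (metis less_le_trans linorder_not_le ennreal_leI less_imp_le)
  have ba: "b \<le> K * a" using assms(6) a b assms(7) a0 by (simp add: ennreal_mult[symmetric])
  have divr: "X / ennreal y = X * ennreal (1/y)" if "y > 0" for X y
    using that by (simp add: divide_ennreal_def inverse_ennreal divide_inverse)
  have "osc m g A = (INF c::real. (\<integral>\<^sup>+ y\<in>A. ennreal \<bar>g y - c\<bar> \<partial>m) / emeasure m A)"
    using assms(4) by (simp add: osc_def)
  also have "\<dots> \<le> ennreal K * (INF c::real. (\<integral>\<^sup>+ y\<in>B. ennreal \<bar>g y - c\<bar> \<partial>m) / emeasure m B)"
  proof (cases "K = 0")
    case True
    then show ?thesis using ba a0 b0 by simp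
  next
    case False
    then have K: "K > 0" using assms(7) by simp
    have "(INF c::real. (\<integral>\<^sup>+ y\<in>A. ennreal \<bar>g y - c\<bar> \<partial>m) / emeasure m A) * ennreal (1/K)
        \<le> (INF c::real. (\<integral>\<^sup>+ y\<in>B. ennreal \<bar>g y - c\<bar> \<partial>m) / emeasure m B)"
    proof (rule INF_greatest)
      fix c :: real
      let ?IA = "(\<integral>\<^sup>+ y\<in>A. ennreal \<bar>g y - c\<bar> \<partial>m)"
      let ?IB = "(\<integral>\<^sup>+ y\<in>B. ennreal \<bar>g y - c\<bar> \<partial>m)"
      have IAB: "?IA \<le> ?IB"
        using assms(1) by (intro nn_integral_mono) (auto split: split_indicator)
      have "(INF c::real. (\<integral>\<^sup>+ y\<in>A. ennreal \<bar>g y - c\<bar> \<partial>m) / emeasure m A) * ennreal (1/K)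
          \<le> ?IA / emeasure m A * ennreal (1/K)"
        by (intro mult_right_mono INF_lower) auto
      also have "\<dots> = ?IA * (ennreal (1/a) * ennreal (1/K))"
        unfolding a divr[OF a0] by (simp add: mult.assoc)
      also have "\<dots> = ?IA * ennreal (1/(a*K))"
        using a0 K by (simp add: ennreal_mult[symmetric])
      also have "\<dots> \<le> ?IB * ennreal (1/b)"
      proof (intro mult_mono IAB ennreal_leI)
        show "1 / (a * K) \<le> 1 / b" using ba a0 b0 K by (intro divide_left_mono) (auto simp: mult.commute)
      qed auto
      also have "\<dots> = ?IB / emeasure m B"
        unfolding b divr[OF b0] ..
      finally show "(INF c::real. (\<integral>\<^sup>+ y\<in>A. ennreal \<bar>g y - c\<bar> \<partial>m) / emeasure m A) * ennreal (1/K)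
          \<le> ?IB / emeasure m B" .
    qed
    then have "ennreal K * ((INF c::real. (\<integral>\<^sup>+ y\<in>A. ennreal \<bar>g y - c\<bar> \<partial>m) / emeasure m A) * ennreal (1/K))
        \<le> ennreal K * (INF c::real. (\<integral>\<^sup>+ y\<in>B. ennreal \<bar>g y - c\<bar> \<partial>m) / emeasure m B)"
      by (rule mult_left_mono) auto
    moreover have "ennreal K * (X * ennreal (1/K)) = X" for X
    proof -
      have "ennreal K * (X * ennreal (1/K)) = X * (ennreal K * ennreal (1/K))" by (simp add: ac_simps)
      also have "ennreal K * ennreal (1/K) = 1" using K by (simp add: ennreal_mult[symmetric])
      finally show ?thesis by simp
    qed
    ultimately show ?thesis by simp
  qed
  also have "\<dots> = ennreal K * osc m g B"
    using b b0 by (simp add: osc_def)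
  finally show ?thesis .
qed


lemma two_powr_neg: "2 powr (- real n) = (1/2::real)^n"
  by (simp add: powr_minus powr_realpow power_one_over inverse_eq_divide)

lemma dyadic_choice:
  fixes t :: real
  assumes "0 < t" "t \<le> 1/2"
  shows "\<exists>j. t \<le> 2 powr - real (Suc j) \<and> 2 powr - real (Suc j) < 2*t"
proof -
  have ex: "\<exists>n. (1/2::real)^n < 2*t" using assms by (intro real_arch_pow_inv) auto
  define n where "n = (LEAST n. (1/2::real)^n < 2*t)"
  have n1: "(1/2::real)^n < 2*t" unfolding n_def using ex by (rule LeastI_ex)
  have "n \<noteq> 0" proof assume "n = 0" then show False using n1 assms by simp qed
  then obtain j where j: "n = Suc j" by (cases n) auto
  have "\<not> (1/2::real)^j < 2*t" unfolding n_def
    using j n_def not_less_Least[of j "\<lambda>n. (1/2::real)^n < 2*t"] by simp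
  then have "t \<le> (1/2::real)^(Suc j)" by simp
  then have "t \<le> 2 powr - real (Suc j) \<and> 2 powr - real (Suc j) < 2*t"
    using n1 j by (simp only: two_powr_neg)
  then show ?thesis by blast
qed



locale trset =
  fixes mu nu :: "'a::metric_space measure" and p \<theta> c k1 k2 D R :: real and S :: "'a set" and m :: nat
  assumes smu: "sets mu = sets borel" and snu: "sets nu = sets borel"
    and fin: "\<And>x r. emeasure mu (cball x r) < \<infinity>"
    and posm: "\<And>x r. 0 < r \<Longrightarrow> 0 < emeasure mu (cball x r)"
    and dbl: "\<And>x r. 0 < r \<Longrightarrow> r \<le> R \<Longrightarrow> emeasure mu (cball x (2*r)) \<le> ennreal D * emeasure mu (cball x r)"
    and D1: "1 \<le> D" and Rm: "2^m \<le> R" and cm: "c \<le> 2^m" and c1: "1 \<le> c"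
    and nuS: "\<And>A. A \<in> sets borel \<Longrightarrow> emeasure nu (A \<inter> S) = emeasure nu A"
    and Sc: "closed S"
    and adr: "\<And>x r. x \<in> S \<Longrightarrow> 0 < r \<Longrightarrow> r \<le> 1 \<Longrightarrow>
        ennreal k1 * emeasure mu (cball x r) * ennreal (r powr -\<theta>) \<le> emeasure nu (cball x r) \<and>
        emeasure nu (cball x r) \<le> ennreal k2 * emeasure mu (cball x r) * ennreal (r powr -\<theta>)"
    and k1: "0 < k1" and k2: "0 < k2" and th0: "0 < \<theta>" and thp: "\<theta> < p"
begin

lemma R1: "1 \<le> R" using Rm by (meson one_le_power order_trans one_le_numeral)

lemma mu_real: "emeasure mu (cball x r) = ennreal (measure mu (cball x r))"
  using fin[of x r] by (intro emeasure_eq_ennreal_measure) auto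

lemma mu_real_pos: "0 < r \<Longrightarrow> 0 < measure mu (cball x r)"
  using posm[of r x] mu_real[of x r] by simp

lemma dbl_iter: "0 < r \<Longrightarrow> 2^n * r \<le> 2 * R \<Longrightarrow> emeasure mu (cball x (2^n * r)) \<le> ennreal (D^n) * emeasure mu (cball x r)"
  using doubling_iter[of R mu D r n x] dbl D1 by auto

lemma mu_mono: "cball x a \<subseteq> cball y b \<Longrightarrow> emeasure mu (cball x a) \<le> emeasure mu (cball y b)"
  by (intro emeasure_mono) (auto simp: smu)

lemma nu_mono: "A \<subseteq> B \<Longrightarrow> B \<in> sets borel \<Longrightarrow> emeasure nu A \<le> emeasure nu B"
  by (intro emeasure_mono) (auto simp: snu)

definition "KK = k2 * D^4 * 4 powr (-\<theta>) / k1"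
definition "C0 = D * c powr p * 8 powr (p-\<theta>) / k1 * KK powr p"

lemma KK_pos: "KK > 0" using k1 k2 D1 by (simp add: KK_def)
lemma C0_pos: "C0 > 0" using k1 D1 c1 KK_pos by (simp add: C0_def)

lemma term_bound:
  assumes r: "0 < r" and small: "8*c*r \<le> 1" and y: "y \<in> S" "dist x y \<le> c*r"
    and t: "4*(c*r) \<le> t" "t < 8*(c*r)" "t = 2 powr - real k"
  shows "emeasure mu (cball x r) / ennreal (r powr p) * epow (osc nu f (cball x (2*c*r))) p
     \<le> ennreal C0 * (ennreal (2 powr (real k * (1-\<theta>/p)*p)) *
         (\<integral>\<^sup>+z. epow (osc nu f (cball z t)) p * indicator (cball y (c*r) \<inter> S) z \<partial>nu))"
proof -
  define \<rho> where "\<rho> = c * r"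
  have rho: "0 < \<rho>" "\<rho> \<le> 1/8" "r \<le> \<rho>" using r small c1 by (auto simp: \<rho>_def)
  have p0: "0 < p" using th0 thp by simp
  have tpos: "0 < t" "t \<le> 1" using t(3) apply simp using t(2) small by (simp add: algebra_simps)
  define my where "my = measure mu (cball y \<rho>)"
  have my: "emeasure mu (cball y \<rho>) = ennreal my" "0 < my"
    using mu_real mu_real_pos rho by (auto simp: my_def)
  define E where "E = epow (osc nu f (cball x (2*c*r))) p"
  define g where "g = (\<lambda>z. epow (osc nu f (cball z t)) p)"
  define Ay where "Ay = cball y \<rho> \<inter> S"
  have Ay_sets: "Ay \<in> sets nu" using Sc by (auto simp: Ay_def snu)
  have nuAy: "emeasure nu Ay = emeasure nu (cball y \<rho>)"
    unfolding Ay_def by (rule nuS) auto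
  have adry: "ennreal (k1 * my * \<rho> powr -\<theta>) \<le> emeasure nu (cball y \<rho>)"
    using adr[OF y(1) rho(1)] rho my k1 by (simp add: ennreal_mult)
  have lowpos: "0 < k1 * my * \<rho> powr -\<theta>" using k1 my rho by simp
  define A where "A = cball x (2*c*r)"
  have yA: "cball y \<rho> \<subseteq> A"
  proof
    fix w assume "w \<in> cball y \<rho>"
    then have "dist x w \<le> c*r + c*r" using y(2) dist_triangle[of x w y] by (simp add: \<rho>_def)
    then show "w \<in> A" by (simp add: A_def)
  qed
  have nuA: "emeasure nu (cball y \<rho>) \<le> emeasure nu A"
    using yA by (intro nu_mono) (auto simp: A_def)
  have nuApos: "0 < emeasure nu A"
    using adry nuA lowpos by (metis ennreal_less_zero_iff order.strict_trans2)
  have pt: "E \<le> ennreal (KK powr p) * g z" if z: "z \<in> Ay" for z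
  proof -
    have zS: "z \<in> S" and zy: "dist y z \<le> \<rho>" using z by (auto simp: Ay_def)
    define B where "B = cball z t"
    have AB: "A \<subseteq> B"
      unfolding A_def B_def
    proof
      fix w assume "w \<in> cball x (2*c*r)"
      then have "dist x w \<le> 2*\<rho>" by (simp add: \<rho>_def)
      moreover have "dist z x \<le> 2*\<rho>" using y(2) zy
        by (metis \<rho>_def dist_commute dist_triangle mult_2 add_mono order_trans)
      ultimately have "dist z w \<le> 4*\<rho>" using dist_triangle[of z w x] by simp
      then show "w \<in> cball z t" using t(1) by (simp add: \<rho>_def)
    qed
    have Bsub: "B \<subseteq> cball y (2^4 * \<rho>)"
      unfolding B_def
    proof
      fix w assume "w \<in> cball z t"
      then have "dist y w \<le> \<rho> + t" using zy dist_triangle[of y w z] by simp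
      then show "w \<in> cball y (2^4 * \<rho>)" using t(2) rho by (simp add: \<rho>_def)
    qed
    have muB: "emeasure mu B \<le> ennreal (D^4) * ennreal my"
    proof -
      have "emeasure mu B \<le> emeasure mu (cball y (2^4 * \<rho>))" using Bsub unfolding B_def by (rule mu_mono)
      also have "\<dots> \<le> ennreal (D^4) * emeasure mu (cball y \<rho>)"
        using rho R1 by (intro dbl_iter) auto
      finally show ?thesis using my by simp
    qed
    have tth: "t powr -\<theta> \<le> 4 powr -\<theta> * \<rho> powr -\<theta>"
    proof -
      have "t powr -\<theta> \<le> (4*\<rho>) powr -\<theta>" using t(1) rho th0 by (intro powr_mono2') (auto simp: \<rho>_def)
      also have "\<dots> = 4 powr -\<theta> * \<rho> powr -\<theta>" using rho by (simp add: powr_mult)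
      finally show ?thesis .
    qed
    have nuB: "emeasure nu B \<le> ennreal (KK * (k1 * my * \<rho> powr -\<theta>))"
    proof -
      have "emeasure nu B \<le> ennreal k2 * emeasure mu B * ennreal (t powr -\<theta>)"
        using adr[OF zS tpos] by (simp add: B_def)
      also have "\<dots> \<le> ennreal k2 * (ennreal (D^4) * ennreal my) * ennreal (4 powr -\<theta> * \<rho> powr -\<theta>)"
        by (intro mult_mono muB ennreal_leI tth order_refl) auto
      also have "\<dots> = ennreal (KK * (k1 * my * \<rho> powr -\<theta>))"
        using k1 k2 D1 my by (simp add: KK_def ennreal_mult[symmetric])
      finally show ?thesis .
    qed
    have nuBA: "emeasure nu B \<le> ennreal KK * emeasure nu A"
    proof -
      have "ennreal (KK * (k1 * my * \<rho> powr -\<theta>)) = ennreal KK * ennreal (k1 * my * \<rho> powr -\<theta>)"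
        using KK_pos lowpos by (simp add: ennreal_mult)
      also have "\<dots> \<le> ennreal KK * emeasure nu A"
        using adry nuA by (intro mult_left_mono) auto
      finally show ?thesis using nuB by simp
    qed
    have oscb: "osc nu f A \<le> ennreal KK * osc nu f B"
    proof (rule osc_ratio[OF AB])
      show "A \<in> sets nu" "B \<in> sets nu" by (auto simp: A_def B_def snu)
      show "0 < emeasure nu A" by (rule nuApos)
      show "emeasure nu B < \<infinity>" using le_less_trans[OF nuB ennreal_less_top] by simp
      show "emeasure nu B \<le> ennreal KK * emeasure nu A" by (rule nuBA)
      show "0 \<le> KK" using KK_pos by simp
    qed
    have "E \<le> epow (ennreal KK * osc nu f B) p"
      unfolding E_def A_def[symmetric] using oscb p0 by (intro epow_mono) auto
    also have "\<dots> = ennreal (KK powr p) * g z"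
      using KK_pos p0 by (simp add: epow_mult g_def B_def)
    finally show ?thesis .
  qed
  have intb: "emeasure nu Ay * E \<le> ennreal (KK powr p) * (\<integral>\<^sup>+z. g z * indicator Ay z \<partial>nu)"
  proof -
    have "emeasure nu Ay * E = (\<integral>\<^sup>+z. E * indicator Ay z \<partial>nu)"
      using Ay_sets by (simp add: nn_integral_cmult_indicator mult.commute)
    also have "\<dots> \<le> (\<integral>\<^sup>+z. ennreal (KK powr p) * (g z * indicator Ay z) \<partial>nu)"
      using pt by (intro nn_integral_mono) (auto split: split_indicator)
    also have "\<dots> \<le> ennreal (KK powr p) * (\<integral>\<^sup>+z. g z * indicator Ay z \<partial>nu)"
      by (rule nn_integral_cmult_le) simp
    finally show ?thesis .
  qed
  have mux: "emeasure mu (cball x r) \<le> ennreal (D * my)"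
  proof -
    have "cball x r \<subseteq> cball y (2 * \<rho>)"
    proof
      fix w assume "w \<in> cball x r"
      then have "dist y w \<le> c*r + r" using y(2) dist_triangle[of y w x] by (simp add: dist_commute)
      then show "w \<in> cball y (2*\<rho>)" using rho by (simp add: \<rho>_def)
    qed
    then have "emeasure mu (cball x r) \<le> emeasure mu (cball y (2 * \<rho>))" by (rule mu_mono)
    also have "\<dots> \<le> ennreal D * emeasure mu (cball y \<rho>)"
      using rho R1 by (intro dbl) auto
    finally show ?thesis using my D1 by (simp add: ennreal_mult)
  qed
  define a where "a = D * \<rho> powr \<theta> / (k1 * r powr p)"
  have a0: "0 \<le> a" using D1 k1 by (simp add: a_def)
  have "emeasure mu (cball x r) / ennreal (r powr p) * E \<le> ennreal (D * my) / ennreal (r powr p) * E"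
    using mux by (intro mult_right_mono divide_right_mono_ennreal) auto
  also have "\<dots> = ennreal a * (ennreal (k1 * my * \<rho> powr -\<theta>) * E)"
  proof -
    have "D * my / r powr p = a * (k1 * my * \<rho> powr -\<theta>)"
      using k1 rho by (simp add: a_def powr_minus field_simps)
    moreover have "ennreal (D * my) / ennreal (r powr p) = ennreal (D * my / r powr p)"
      using r D1 my by (intro divide_ennreal) auto
    moreover have "ennreal (a * (k1 * my * \<rho> powr -\<theta>)) = ennreal a * ennreal (k1 * my * \<rho> powr -\<theta>)"
      using a0 lowpos by (intro ennreal_mult) auto
    ultimately show ?thesis by (simp add: mult.assoc)
  qed
  also have "\<dots> \<le> ennreal a * (emeasure nu Ay * E)"
    using adry nuAy by (intro mult_left_mono mult_right_mono) auto
  also have "\<dots> \<le> ennreal a * (ennreal (KK powr p) * (\<integral>\<^sup>+z. g z * indicator Ay z \<partial>nu))"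
    using intb by (intro mult_left_mono) auto
  also have "\<dots> \<le> ennreal C0 * (ennreal (2 powr (real k * (1-\<theta>/p)*p)) * (\<integral>\<^sup>+z. g z * indicator Ay z \<partial>nu))"
  proof -
    have cb: "\<rho> powr \<theta> / r powr p \<le> c powr p * 8 powr (p - \<theta>) * 2 powr (real k * (1 - \<theta>/p) * p)"
      using coeff_bound[OF r c1 \<rho>_def th0 thp _ t(3)] t(2) by (simp add: \<rho>_def)
    have "a * KK powr p \<le> C0 * 2 powr (real k * (1-\<theta>/p)*p)"
    proof -
      have "a = (D / k1) * (\<rho> powr \<theta> / r powr p)" by (simp add: a_def)
      also have "\<dots> \<le> (D / k1) * (c powr p * 8 powr (p - \<theta>) * 2 powr (real k * (1 - \<theta>/p) * p))"
        using cb D1 k1 by (intro mult_left_mono) auto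
      finally have "a * KK powr p \<le> (D / k1) * (c powr p * 8 powr (p - \<theta>) * 2 powr (real k * (1 - \<theta>/p) * p)) * KK powr p"
        by (intro mult_right_mono) auto
      also have "\<dots> = C0 * 2 powr (real k * (1-\<theta>/p)*p)" by (simp add: C0_def)
      finally show ?thesis .
    qed
    then have "ennreal a * ennreal (KK powr p) \<le> ennreal C0 * ennreal (2 powr (real k * (1-\<theta>/p)*p))"
      using a0 C0_pos by (simp add: ennreal_mult[symmetric] ennreal_leI)
    then show ?thesis by (simp add: mult.assoc[symmetric] mult_right_mono)
  qed
  finally show ?thesis unfolding E_def g_def Ay_def \<rho>_def .
qed

end



context trset begin

lemma overlap:
  fixes x y :: "nat \<Rightarrow> 'a" and z :: 'a and r :: "nat \<Rightarrow> real" and J :: "nat set"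
  assumes fJ: "finite J"
    and props: "\<And>i. i \<in> J \<Longrightarrow> 0 < r i \<and> 8*c*r i \<le> 1 \<and> dist (x i) (y i) \<le> c*r i \<and>
         4*(c*r i) \<le> t \<and> t < 8*(c*r i) \<and> dist (y i) z \<le> c*r i"
    and disj: "\<And>i i'. i \<in> J \<Longrightarrow> i' \<in> J \<Longrightarrow> i \<noteq> i' \<Longrightarrow> cball (x i) (r i) \<inter> cball (x i') (r i') = {}"
  shows "real (card J) \<le> D^(m+4)"
proof (cases "J = {}")
  case True then show ?thesis using D1 by simp
next
  case False
  then obtain i0 where i0: "i0 \<in> J" by auto
  have "0 < c * r i0" using props[OF i0] c1 by simp
  then have tpos: "0 < t" using props[OF i0] by linarith
  define bz where "bz = measure mu (cball z t)"
  have bz: "emeasure mu (cball z t) = ennreal bz" "0 < bz"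
    using mu_real mu_real_pos tpos by (auto simp: bz_def)
  have sub1: "cball (x i) (r i) \<subseteq> cball z t" if i: "i \<in> J" for i
  proof
    fix w assume "w \<in> cball (x i) (r i)"
    then have "dist (x i) w \<le> r i" by simp
    moreover have "dist z (x i) \<le> 2 * (c * r i)"
      using props[OF i] dist_triangle[of z "x i" "y i"] by (simp add: dist_commute)
    ultimately have "dist z w \<le> 2 * (c*r i) + r i" using dist_triangle[of z w "x i"] by simp
    moreover have "r i \<le> c * r i" using props[OF i] c1 by simp
    ultimately have "dist z w \<le> t" using props[OF i] by linarith
    then show "w \<in> cball z t" by simp
  qed
  have muz: "emeasure mu (cball z t) \<le> ennreal (D^(m+4)) * emeasure mu (cball (x i) (r i))"
    if i: "i \<in> J" for i
  proof -
    have ri: "0 < r i" "8*c*r i \<le> 1" using props[OF i] by auto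
    have "c * r i \<le> 2^m * r i" using cm ri by simp
    have sub2: "cball z t \<subseteq> cball (x i) (2^(m+4) * r i)"
    proof
      fix w assume "w \<in> cball z t"
      then have "dist z w \<le> t" by simp
      moreover have "dist (x i) z \<le> 2 * (c * r i)"
        using props[OF i] dist_triangle[of "x i" z "y i"] by simp
      ultimately have "dist (x i) w \<le> 2 * (c * r i) + t" using dist_triangle[of "x i" w z] by simp
      also have "\<dots> \<le> 16 * (c * r i)" using props[OF i] by simp
      also have "\<dots> \<le> 16 * (2^m * r i)" using \<open>c * r i \<le> 2^m * r i\<close> by simp
      also have "\<dots> = 2^(m+4) * r i" by (simp add: power_add)
      finally show "w \<in> cball (x i) (2^(m+4) * r i)" by simp
    qed
    have "emeasure mu (cball z t) \<le> emeasure mu (cball (x i) (2^(m+4) * r i))"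
      using sub2 by (rule mu_mono)
    also have "\<dots> \<le> ennreal (D^(m+4)) * emeasure mu (cball (x i) (r i))"
    proof (rule dbl_iter[OF ri(1)])
      have "r i \<le> c * r i" using c1 ri(1) by simp
      then have "r i \<le> 1/8" using ri(2) by (simp add: mult.assoc)
      then have "2^(m+4) * r i \<le> 2^(m+4) * (1/8)" by (intro mult_left_mono) auto
      also have "\<dots> = 2 * 2^m" by (simp add: power_add)
      also have "\<dots> \<le> 2 * R" using Rm by simp
      finally show "2^(m+4) * r i \<le> 2 * R" .
    qed
    finally show ?thesis .
  qed
  have "of_nat (card J) * emeasure mu (cball z t) = (\<Sum>i\<in>J. emeasure mu (cball z t))" by simp
  also have "\<dots> \<le> (\<Sum>i\<in>J. ennreal (D^(m+4)) * emeasure mu (cball (x i) (r i)))"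
    using muz by (intro sum_mono) auto
  also have "\<dots> = ennreal (D^(m+4)) * (\<Sum>i\<in>J. emeasure mu (cball (x i) (r i)))"
    by (simp add: sum_distrib_left)
  also have "(\<Sum>i\<in>J. emeasure mu (cball (x i) (r i))) = emeasure mu (\<Union>i\<in>J. cball (x i) (r i))"
  proof (rule sum_emeasure)
    show "(\<lambda>i. cball (x i) (r i)) ` J \<subseteq> sets mu" by (auto simp: smu)
    show "disjoint_family_on (\<lambda>i. cball (x i) (r i)) J" using disj by (auto simp: disjoint_family_on_def)
  qed (rule fJ)
  also have "emeasure mu (\<Union>i\<in>J. cball (x i) (r i)) \<le> emeasure mu (cball z t)"
    using sub1 by (intro emeasure_mono) (auto simp: smu)
  finally have "of_nat (card J) * ennreal bz \<le> ennreal (D^(m+4)) * ennreal bz"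
    unfolding bz by (simp add: mult_left_mono)
  then have "ennreal (real (card J) * bz) \<le> ennreal (D^(m+4) * bz)"
    using bz D1 by (simp add: ennreal_mult ennreal_of_nat_eq_real_of_nat)
  then have "real (card J) * bz \<le> D^(m+4) * bz"
    using bz D1 by (subst (asm) ennreal_le_iff) auto
  then show ?thesis using bz by simp
qed

end


context trset begin

lemma core:
  "\<exists>C>0. \<forall>M x r. nice_family S c M x r \<and> (\<forall>i<M. 8 * c * r i \<le> 1) \<longrightarrow>
     (\<forall>f. (\<Sum>i<M. emeasure mu (cball (x i) (r i)) / ennreal (r i powr p) *
                  epow (osc nu f (cball (x i) (2 * c * r i))) p)
        \<le> ennreal C * (\<Sum>k. ennreal (2 powr (real (Suc k) * (1 - \<theta>/p) * p)) *
             (\<integral>\<^sup>+ z\<in>S. epow (osc nu f (cball z (2 powr (- real (Suc k))))) p \<partial>nu)))"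
proof -
  define N where "N = D^(m+4)"
  have N1: "1 \<le> N" using D1 by (simp add: N_def)
  have CP: "C0 * N > 0" using C0_pos N1 by simp
  show ?thesis
  proof (intro exI[of _ "C0 * N"] conjI CP allI impI)
    fix M :: nat and x :: "nat \<Rightarrow> 'a" and r :: "nat \<Rightarrow> real" and f :: "'a \<Rightarrow> real"
    assume H: "nice_family S c M x r \<and> (\<forall>i<M. 8 * c * r i \<le> 1)"
    have nf: "\<And>i. i < M \<Longrightarrow> 0 < r i \<and> r i \<le> 1 \<and> cball (x i) (c * r i) \<inter> S \<noteq> {}"
      and dj: "\<And>i j. i < M \<Longrightarrow> j < M \<Longrightarrow> i \<noteq> j \<Longrightarrow> cball (x i) (r i) \<inter> cball (x j) (r j) = {}"
      and sm: "\<And>i. i < M \<Longrightarrow> 8 * c * r i \<le> 1"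
      using H by (auto simp: nice_family_def)
    have "\<forall>i\<in>{..<M}. \<exists>yj. fst yj \<in> S \<and> dist (x i) (fst yj) \<le> c * r i \<and>
        4 * (c * r i) \<le> 2 powr - real (Suc (snd yj)) \<and> 2 powr - real (Suc (snd yj)) < 8 * (c * r i)"
    proof
      fix i assume "i \<in> {..<M}"
      then have i: "i < M" by simp
      obtain y where y: "y \<in> S" "dist (x i) y \<le> c * r i" using nf[OF i] by auto
      have "0 < 4 * (c * r i)" using nf[OF i] c1 by simp
      moreover have "4 * (c * r i) \<le> 1/2" using sm[OF i] by simp
      ultimately obtain j where "4 * (c * r i) \<le> 2 powr - real (Suc j)" "2 powr - real (Suc j) < 2 * (4 * (c * r i))"
        using dyadic_choice by blast
      then show "\<exists>yj. fst yj \<in> S \<and> dist (x i) (fst yj) \<le> c * r i \<and>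
        4 * (c * r i) \<le> 2 powr - real (Suc (snd yj)) \<and> 2 powr - real (Suc (snd yj)) < 8 * (c * r i)"
        using y by (intro exI[of _ "(y, j)"]) simp
    qed
    then obtain yj where yj: "\<And>i. i < M \<Longrightarrow> fst (yj i) \<in> S \<and> dist (x i) (fst (yj i)) \<le> c * r i \<and>
        4 * (c * r i) \<le> 2 powr - real (Suc (snd (yj i))) \<and> 2 powr - real (Suc (snd (yj i))) < 8 * (c * r i)"
      by (metis bchoice lessThan_iff)
    define Y where "Y = (\<lambda>i. fst (yj i))"
    define Jf where "Jf = (\<lambda>i. snd (yj i))"
    define w where "w = (\<lambda>q. ennreal (2 powr (real (Suc q) * (1 - \<theta>/p) * p)))"
    define g where "g = (\<lambda>q z. epow (osc nu f (cball z (2 powr (- real (Suc q))))) p)"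
    define As where "As = (\<lambda>i. cball (Y i) (c * r i) \<inter> S)"
    define II where "II = (\<lambda>i. \<integral>\<^sup>+z. g (Jf i) z * indicator (As i) z \<partial>nu)"
    define G where "G = (\<lambda>q. \<integral>\<^sup>+ z\<in>S. g q z \<partial>nu)"
    have step1: "(\<Sum>i<M. emeasure mu (cball (x i) (r i)) / ennreal (r i powr p) *
                  epow (osc nu f (cball (x i) (2 * c * r i))) p)
        \<le> (\<Sum>i<M. ennreal C0 * (w (Jf i) * II i))"
    proof (rule sum_mono)
      fix i assume "i \<in> {..<M}"
      then have i: "i < M" by simp
      show "emeasure mu (cball (x i) (r i)) / ennreal (r i powr p) *
                  epow (osc nu f (cball (x i) (2 * c * r i))) p \<le> ennreal C0 * (w (Jf i) * II i)"
        unfolding w_def II_def g_def As_def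
        using term_bound[of "r i" "Y i" "x i" "2 powr (- real (Suc (Jf i)))" "Suc (Jf i)" f] nf[OF i] sm[OF i] yj[OF i]
        by (simp add: Y_def Jf_def)
    qed
    have step2: "(\<Sum>i<M. ennreal C0 * (w (Jf i) * II i))
        = ennreal C0 * (\<Sum>q\<in>Jf ` {..<M}. w q * (\<Sum>i\<in>{i. i \<in> {..<M} \<and> Jf i = q}. II i))"
    proof -
      have "(\<Sum>i<M. w (Jf i) * II i) = (\<Sum>q\<in>Jf ` {..<M}. \<Sum>i\<in>{i. i \<in> {..<M} \<and> Jf i = q}. w (Jf i) * II i)"
        by (rule sum.group[symmetric]) auto
      also have "\<dots> = (\<Sum>q\<in>Jf ` {..<M}. w q * (\<Sum>i\<in>{i. i \<in> {..<M} \<and> Jf i = q}. II i))"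
        by (intro sum.cong refl) (auto simp: sum_distrib_left)
      finally have e: "(\<Sum>i<M. w (Jf i) * II i) = (\<Sum>q\<in>Jf ` {..<M}. w q * (\<Sum>i\<in>{i. i \<in> {..<M} \<and> Jf i = q}. II i))" .
      have "(\<Sum>i<M. ennreal C0 * (w (Jf i) * II i)) = ennreal C0 * (\<Sum>i<M. w (Jf i) * II i)"
        by (rule sum_distrib_left[symmetric])
      then show ?thesis unfolding e .
    qed
    have step3: "(\<Sum>i\<in>{i. i \<in> {..<M} \<and> Jf i = q}. II i) \<le> ennreal N * G q" for q
    proof -
      let ?Jq = "{i. i \<in> {..<M} \<and> Jf i = q}"
      have "(\<Sum>i\<in>?Jq. II i) = (\<Sum>i\<in>?Jq. \<integral>\<^sup>+z. g q z * indicator (As i) z \<partial>nu)"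
        unfolding II_def by (intro sum.cong refl) auto
      also have "\<dots> \<le> (\<integral>\<^sup>+z. (\<Sum>i\<in>?Jq. g q z * indicator (As i) z) \<partial>nu)"
        by (rule nn_integral_sum_superadd)
      also have "\<dots> \<le> (\<integral>\<^sup>+z. ennreal N * (g q z * indicator S z) \<partial>nu)"
      proof (rule nn_integral_mono)
        fix z
        have cnt: "(\<Sum>i\<in>?Jq. indicator (As i) z :: ennreal) \<le> ennreal N * indicator S z"
        proof (cases "z \<in> S")
          case False
          then show ?thesis by (simp add: As_def)
        next
          case True
          let ?Jz = "{i \<in> ?Jq. z \<in> As i}"
          have fz: "finite ?Jq" by simp
          have "(\<Sum>i\<in>?Jq. indicator (As i) z :: ennreal) = (\<Sum>i\<in>?Jq. if z \<in> As i then 1 else 0)"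
            by (intro sum.cong) (auto simp: indicator_def)
          also have "\<dots> = (\<Sum>i\<in>?Jz. 1)"
            using fz by (rule sum.inter_filter[symmetric])
          also have "\<dots> = of_nat (card ?Jz)" by simp
          also have "\<dots> \<le> ennreal N"
          proof -
            have "real (card ?Jz) \<le> D^(m+4)"
            proof (rule overlap[where x = x and y = Y and r = r and z = z and t = "2 powr (- real (Suc q))"])
              show "finite ?Jz" by simp
              fix i assume "i \<in> ?Jz"
              then have i: "i < M" "Jf i = q" "z \<in> As i" by auto
              show "0 < r i \<and> 8*c*r i \<le> 1 \<and> dist (x i) (Y i) \<le> c*r i \<and>
                4*(c*r i) \<le> 2 powr (- real (Suc q)) \<and> 2 powr (- real (Suc q)) < 8*(c*r i) \<and> dist (Y i) z \<le> c*r i"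
                using nf[OF i(1)] sm[OF i(1)] yj[OF i(1)] i(2,3) by (auto simp: Y_def Jf_def As_def)
            next
              fix i i' assume "i \<in> ?Jz" "i' \<in> ?Jz" "i \<noteq> i'"
              then show "cball (x i) (r i) \<inter> cball (x i') (r i') = {}" using dj by auto
            qed
            then show ?thesis using N1 by (simp add: N_def ennreal_of_nat_eq_real_of_nat ennreal_leI)
          qed
          finally show ?thesis using True by simp
        qed
        have "(\<Sum>i\<in>?Jq. g q z * indicator (As i) z) = g q z * (\<Sum>i\<in>?Jq. indicator (As i) z)"
          by (simp add: sum_distrib_left)
        also have "\<dots> \<le> g q z * (ennreal N * indicator S z)"
          using cnt by (rule mult_left_mono) simp
        finally show "(\<Sum>i\<in>?Jq. g q z * indicator (As i) z) \<le> ennreal N * (g q z * indicator S z)"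
          by (simp add: ac_simps)
      qed
      also have "\<dots> \<le> ennreal N * G q"
        unfolding G_def using N1 by (intro nn_integral_cmult_le) simp
      finally show ?thesis .
    qed
    have step4: "(\<Sum>q\<in>Jf ` {..<M}. w q * (\<Sum>i\<in>{i. i \<in> {..<M} \<and> Jf i = q}. II i))
        \<le> ennreal N * (\<Sum>q. w q * G q)"
    proof -
      have "(\<Sum>q\<in>Jf ` {..<M}. w q * (\<Sum>i\<in>{i. i \<in> {..<M} \<and> Jf i = q}. II i))
          \<le> (\<Sum>q\<in>Jf ` {..<M}. w q * (ennreal N * G q))"
        using step3 by (intro sum_mono mult_left_mono) auto
      also have "\<dots> = ennreal N * (\<Sum>q\<in>Jf ` {..<M}. w q * G q)"
        by (simp add: sum_distrib_left ac_simps)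
      also have "(\<Sum>q\<in>Jf ` {..<M}. w q * G q) \<le> (\<Sum>q. w q * G q)"
        by (intro sum_le_suminf) auto
      finally show ?thesis by (simp add: mult_left_mono)
    qed
    have "(\<Sum>i<M. emeasure mu (cball (x i) (r i)) / ennreal (r i powr p) *
                  epow (osc nu f (cball (x i) (2 * c * r i))) p)
        \<le> ennreal C0 * (ennreal N * (\<Sum>q. w q * G q))"
      using order_trans[OF step1[unfolded step2] mult_left_mono[OF step4]] by simp
    also have "\<dots> = ennreal (C0 * N) * (\<Sum>q. w q * G q)"
      using C0_pos N1 by (simp add: ennreal_mult mult.assoc)
    finally show "(\<Sum>i<M. emeasure mu (cball (x i) (r i)) / ennreal (r i powr p) *
                  epow (osc nu f (cball (x i) (2 * c * r i))) p)
        \<le> ennreal (C0 * N) * (\<Sum>k. ennreal (2 powr (real (Suc k) * (1 - \<theta>/p) * p)) *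
             (\<integral>\<^sup>+ z\<in>S. epow (osc nu f (cball z (2 powr (- real (Suc k))))) p \<partial>nu))"
      unfolding w_def G_def g_def .
  qed
qed

end


lemma balls_finite:
  fixes mu :: "'a::metric_space measure"
  assumes smu: "sets mu = sets borel"
    and lf: "\<forall>x. \<exists>e>0. emeasure mu (cball x e) < \<infinity>"
    and db: "\<forall>R>0. \<exists>C. \<forall>r. 0 < r \<and> r \<le> R \<longrightarrow>
        (\<forall>x. emeasure mu (cball x (2*r)) \<le> ennreal C * emeasure mu (cball x r))"
  shows "emeasure mu (cball x r) < \<infinity>"
proof -
  obtain e where e: "e > 0" "emeasure mu (cball x e) < \<infinity>" using lf by blast
  obtain n where n: "r / e < 2^n" using real_arch_pow[of 2 "r/e"] by auto
  have rn: "r \<le> 2^n * e" using n e by (simp add: field_simps)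
  have "(2::real)^n * e > 0" using e by simp
  then obtain C where C: "\<forall>r. 0 < r \<and> r \<le> 2^n * e \<longrightarrow>
        (\<forall>x. emeasure mu (cball x (2*r)) \<le> ennreal C * emeasure mu (cball x r))"
    using db by blast
  define D where "D = max C 0"
  have dbl: "emeasure mu (cball y (2*u)) \<le> ennreal D * emeasure mu (cball y u)"
    if "0 < u" "u \<le> 2^n * e" for y u
  proof -
    have "emeasure mu (cball y (2*u)) \<le> ennreal C * emeasure mu (cball y u)" using C that by blast
    also have "\<dots> \<le> ennreal D * emeasure mu (cball y u)"
      by (intro mult_right_mono ennreal_leI) (auto simp: D_def)
    finally show ?thesis .
  qed
  have "emeasure mu (cball x r) \<le> emeasure mu (cball x (2^n * e))"
    using rn by (intro emeasure_mono) (auto simp: smu)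
  also have "\<dots> \<le> ennreal (D^n) * emeasure mu (cball x e)"
    using doubling_iter[of "2^n * e" mu D e n x] dbl e by (auto simp: D_def)
  also have "\<dots> < \<infinity>" using e(2) by (simp add: ennreal_mult_less_top)
  finally show ?thesis .
qed

theorem lemma3p18:
  fixes mu :: "'a::polish_space measure" and p \<theta>2 :: real and S2 :: "'a set"
  assumes "standing_setting mu p"
    and "0 < \<theta>2" and "\<theta>2 < min p (Qlow mu)"
    and "S2 \<in> ADR mu \<theta>2" and "closed S2"
  shows "\<forall>c\<ge>1. \<exists>C>0. \<forall>M x r. nice_family S2 c M x r \<and> (\<forall>i<M. 8 * c * r i \<le> 1) \<longrightarrow>
           (\<forall>f. in_Lp (Hrestr mu \<theta>2 S2) p f \<longrightarrow>
              (\<Sum>i<M. emeasure mu (cball (x i) (r i)) / ennreal (r i powr p) *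
                  epow (osc (Hrestr mu \<theta>2 S2) f (cball (x i) (2 * c * r i))) p)
              \<le> ennreal C * epow (besov_norm mu \<theta>2 S2 (1 - \<theta>2 / p) p f) p)"
proof (intro allI impI)
  fix c :: real assume c1: "1 \<le> c"
  note ss = assms(1)[unfolded standing_setting_def]
  have smu: "sets mu = sets borel" and lf: "\<forall>x. \<exists>e>0. emeasure mu (cball x e) < \<infinity>"
    and posm: "\<forall>x. \<forall>r>0. emeasure mu (cball x r) > 0"
    and db: "\<forall>R>0. \<exists>C. \<forall>r. 0 < r \<and> r \<le> R \<longrightarrow>
        (\<forall>x. emeasure mu (cball x (2*r)) \<le> ennreal C * emeasure mu (cball x r))"
    and p1: "1 < p"
    using ss by blast+
  have thp: "\<theta>2 < p" using assms(3) by simp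
  have p0: "0 < p" using p1 by simp
  define nu where "nu = Hrestr mu \<theta>2 S2"
  define H where "H = (\<lambda>A. Hcod mu \<theta>2 (A \<inter> S2))"
  have sig: "sigma_sets UNIV (sets borel) = (sets borel :: 'a set set)"
    using sets.sigma_sets_eq[of borel] by simp
  have em: "emeasure nu = (\<lambda>B. if B \<in> sets borel \<and> measure_space UNIV (sets borel) H then H B else 0)"
    unfolding nu_def Hrestr_def H_def emeasure_measure_of_conv sig ..
  show "\<exists>C>0. \<forall>M x r. nice_family S2 c M x r \<and> (\<forall>i<M. 8 * c * r i \<le> 1) \<longrightarrow>
           (\<forall>f. in_Lp (Hrestr mu \<theta>2 S2) p f \<longrightarrow>
              (\<Sum>i<M. emeasure mu (cball (x i) (r i)) / ennreal (r i powr p) *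
                  epow (osc (Hrestr mu \<theta>2 S2) f (cball (x i) (2 * c * r i))) p)
              \<le> ennreal C * epow (besov_norm mu \<theta>2 S2 (1 - \<theta>2 / p) p f) p)"
  proof (cases "measure_space UNIV (sets borel) H")
    case False
    then have "emeasure nu B = 0" for B using em by simp
    then have "osc nu f G = 0" for f G by (simp add: osc_def)
    then show ?thesis unfolding nu_def[symmetric] using p0
      by (intro exI[of _ 1]) simp
  next
    case True
    have snu: "sets nu = sets borel"
      unfolding nu_def Hrestr_def by (simp add: sets_measure_of sig)
    have emH: "emeasure nu A = Hcod mu \<theta>2 (A \<inter> S2)" if "A \<in> sets borel" for A
      using em True that by (simp add: H_def)
    have S2b: "S2 \<in> sets borel" using assms(5) by simp
    have nuS: "emeasure nu (A \<inter> S2) = emeasure nu A" if "A \<in> sets borel" for A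
      using emH that S2b by (simp add: Int_assoc)
    obtain k1 k2 where k: "k1 > 0" "k2 > 0" and adr0: "\<forall>x\<in>S2. \<forall>r. 0 < r \<and> r \<le> 1 \<longrightarrow>
         ennreal k1 * emeasure mu (cball x r) * ennreal (r powr (-\<theta>2)) \<le> Hcod mu \<theta>2 (cball x r \<inter> S2) \<and>
         Hcod mu \<theta>2 (cball x r \<inter> S2) \<le> ennreal k2 * emeasure mu (cball x r) * ennreal (r powr (-\<theta>2))"
      using assms(4) unfolding ADR_def by blast
    obtain m where m: "c < 2^m" using real_arch_pow[of 2 c] by auto
    have "(0::real) < 2^m" by simp
    then obtain C where C: "\<forall>r. 0 < r \<and> r \<le> 2^m \<longrightarrow>
        (\<forall>x. emeasure mu (cball x (2*r)) \<le> ennreal C * emeasure mu (cball x r))"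
      using db by blast
    define D where "D = max C 1"
    have dbl: "emeasure mu (cball y (2*u)) \<le> ennreal D * emeasure mu (cball y u)"
      if "0 < u" "u \<le> 2^m" for y u
    proof -
      have "emeasure mu (cball y (2*u)) \<le> ennreal C * emeasure mu (cball y u)" using C that by blast
      also have "\<dots> \<le> ennreal D * emeasure mu (cball y u)"
        by (intro mult_right_mono ennreal_leI) (auto simp: D_def)
      finally show ?thesis .
    qed
    have T: "trset mu nu p \<theta>2 c k1 k2 D (2^m) S2 m"
    proof
      show "sets mu = sets borel" by (rule smu)
      show "sets nu = sets borel" by (rule snu)
      show "emeasure mu (cball x r) < \<infinity>" for x r using balls_finite[OF smu lf db] .
      show "0 < r \<Longrightarrow> 0 < emeasure mu (cball x r)" for x r using posm by blast
      show "0 < r \<Longrightarrow> r \<le> 2^m \<Longrightarrow> emeasure mu (cball x (2*r)) \<le> ennreal D * emeasure mu (cball x r)" for x r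
        using dbl by blast
      show "1 \<le> D" by (simp add: D_def)
      show "(2::real)^m \<le> 2^m" by simp
      show "c \<le> 2^m" using m by simp
      show "1 \<le> c" by (rule c1)
      show "A \<in> sets borel \<Longrightarrow> emeasure nu (A \<inter> S2) = emeasure nu A" for A by (rule nuS)
      show "closed S2" by (rule assms(5))
      show "x \<in> S2 \<Longrightarrow> 0 < r \<Longrightarrow> r \<le> 1 \<Longrightarrow>
        ennreal k1 * emeasure mu (cball x r) * ennreal (r powr -\<theta>2) \<le> emeasure nu (cball x r) \<and>
        emeasure nu (cball x r) \<le> ennreal k2 * emeasure mu (cball x r) * ennreal (r powr -\<theta>2)" for x r
        using adr0 emH[of "cball x r"] by simp
      show "0 < k1" "0 < k2" by (rule k)+
      show "0 < \<theta>2" by (rule assms(2))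
      show "\<theta>2 < p" by (rule thp)
    qed
    obtain C0 where C0: "C0 > 0" and main: "\<forall>M x r. nice_family S2 c M x r \<and> (\<forall>i<M. 8 * c * r i \<le> 1) \<longrightarrow>
     (\<forall>f. (\<Sum>i<M. emeasure mu (cball (x i) (r i)) / ennreal (r i powr p) *
                  epow (osc nu f (cball (x i) (2 * c * r i))) p)
        \<le> ennreal C0 * (\<Sum>k. ennreal (2 powr (real (Suc k) * (1 - \<theta>2/p) * p)) *
             (\<integral>\<^sup>+ z\<in>S2. epow (osc nu f (cball z (2 powr (- real (Suc k))))) p \<partial>nu)))"
      using trset.core[OF T] by blast
    have bes: "(\<Sum>k. ennreal (2 powr (real (Suc k) * (1 - \<theta>2/p) * p)) *
             (\<integral>\<^sup>+ z\<in>S2. epow (osc nu f (cball z (2 powr (- real (Suc k))))) p \<partial>nu))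
        \<le> epow (besov_norm mu \<theta>2 S2 (1 - \<theta>2 / p) p f) p" for f
    proof -
      let ?Y = "(\<Sum>k. ennreal (2 powr (real (Suc k) * (1 - \<theta>2/p) * p)) *
             (\<integral>\<^sup>+ z\<in>S2. epow (osc nu f (cball z (2 powr (- real (Suc k))))) p \<partial>nu))"
      have "?Y = epow (epow ?Y (1/p)) p" using p0 by (simp add: epow_inv)
      also have "\<dots> \<le> epow (besov_norm mu \<theta>2 S2 (1 - \<theta>2 / p) p f) p"
        using p0 by (intro epow_mono) (auto simp: besov_norm_def nu_def)
      finally show ?thesis .
    qed
    show ?thesis
    proof (intro exI[of _ C0] conjI C0 allI impI)
      fix M x r f
      assume H: "nice_family S2 c M x r \<and> (\<forall>i<M. 8 * c * r i \<le> 1)"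
      show "(\<Sum>i<M. emeasure mu (cball (x i) (r i)) / ennreal (r i powr p) *
                  epow (osc (Hrestr mu \<theta>2 S2) f (cball (x i) (2 * c * r i))) p)
              \<le> ennreal C0 * epow (besov_norm mu \<theta>2 S2 (1 - \<theta>2 / p) p f) p"
        unfolding nu_def[symmetric]
        using order_trans[OF main[rule_format, OF H] mult_left_mono[OF bes]] by simp
    qed
  qed
qed


end
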